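(* Let $A$ be a $\mathbb{C}$-algebra, $Q$ a tropical field, and $X\subset A$ a generating set with presentation $0\to I\to\mathbb{C}[X]\to A\to0$ ($x\mapsto x$). Then the map $\pi_X:\mathbb{V}_Q(A)\to Q^X$, $v\mapsto(v(x))_{x\in X}$, takes values in the tropical variety $\operatorname{tr}_Q(I)$. Moreover the maps $\pi_X$ induce a bijection $\mathbb{V}_Q(A)\cong\varprojlim_{X}\operatorname{tr}_Q(I_X)$, the inverse limit over generating sets $X\subset A$ (ordered by inclusion, with coordinate projections as transition maps).
   Context: A tropical field $Q$ is a totally ordered abelian group (operation written $+$, tropical product $\otimes=+$, tropical sum $\oplus=\max$) with an adjoined least element $-\infty$. A valuation $v:A\to Q$ satisfies $v(ab)=v(a)+v(b)$, $v(a+b)\le\max(v(a),v(b))$, $v(0)=-\infty$, $v(c)=0$ for $c\in\mathbb{C}^\times$; $\mathbb{V}_Q(A)$ denotes the set of these. For $f=\sum_i C_i\vec x^{\vec m_i}\in\mathbb{C}[X]$ with $C_i\ne0$ (coefficients given the trivial valuation), its tropicalization is $T(f)(\vec q)=\max_i\langle\vec m_i,\vec q\rangle$, and $\operatorname{tr}(T(f))\subset Q^X$ is the set of $\vec q$ where this maximum is attained by at least two monomials; $\operatorname{tr}_Q(I)=\bigcap_{f\in I}\operatorname{tr}(T(f))$. *)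

theory Defs
  imports Complex_Main "HOL-Library.Poly_Mapping" "HOL-Library.FuncSet"
begin

section \<open>The tropical field Q = (totally ordered abelian group) + adjoined least element -infinity\<close>

datatype 'q trop = MInf | Fin 'q

instantiation trop :: (linorder) linorder
begin
fun less_eq_trop :: "'a trop \<Rightarrow> 'a trop \<Rightarrow> bool" where
  "less_eq_trop MInf _ = True"
| "less_eq_trop (Fin a) MInf = False"
| "less_eq_trop (Fin a) (Fin b) = (a \<le> b)"
definition less_trop :: "'a trop \<Rightarrow> 'a trop \<Rightarrow> bool" where
  "less_trop x y = (x \<le> y \<and> \<not> y \<le> x)"
instance
proof
  fix x y z :: "'a trop"
  show "(x < y) = (x \<le> y \<and> \<not> y \<le> x)" by (simp add: less_trop_def)
  show "x \<le> x" by (cases x) auto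
  show "x \<le> y \<Longrightarrow> y \<le> z \<Longrightarrow> x \<le> z"
    by (cases x; cases y; cases z) auto
  show "x \<le> y \<Longrightarrow> y \<le> x \<Longrightarrow> x = y"
    by (cases x; cases y) auto
  show "x \<le> y \<or> y \<le> x" by (cases x; cases y) auto
qed
end

text \<open>Tropical product (= the group operation + of Q, with -infinity absorbing),
  written as multiplication on the type of tropical numbers; its unit is Fin 0.\<close>
instantiation trop :: (linordered_ab_group_add) comm_monoid_mult
begin
fun times_trop :: "'a trop \<Rightarrow> 'a trop \<Rightarrow> 'a trop" where
  "times_trop (Fin a) (Fin b) = Fin (a + b)"
| "times_trop _ _ = MInf"
definition one_trop :: "'a trop" where "one_trop = Fin 0"
instance
proof
  fix a b c :: "'a trop"
  show "a * b * c = a * (b * c)"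
    by (cases a; cases b; cases c) (auto simp: add.assoc)
  show "a * b = b * a"
    by (cases a; cases b) (auto simp: add.commute)
  show "1 * a = a"
    by (cases a) (auto simp: one_trop_def)
qed
end

text \<open>Variables are elements of the algebra
  'a; C[X] consists of the polynomials all of whose monomials only involve variables in X.\<close>

type_synonym ('a) cpoly = "('a \<Rightarrow>\<^sub>0 nat) \<Rightarrow>\<^sub>0 complex"

definition polys_in :: "'a set \<Rightarrow> 'a cpoly set" where
  "polys_in X = {p :: 'a cpoly. \<forall>m\<in>Poly_Mapping.keys p. Poly_Mapping.keys m \<subseteq> X}"

text \<open>A C-algebra structure on a commutative ring 'a: a unital ring homomorphism C -> 'a.\<close>
definition calg_hom :: "(complex \<Rightarrow> 'a::comm_ring_1) \<Rightarrow> bool" where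
  "calg_hom \<phi> \<longleftrightarrow> \<phi> 1 = 1 \<and> (\<forall>c d. \<phi> (c + d) = \<phi> c + \<phi> d \<and> \<phi> (c * d) = \<phi> c * \<phi> d)"

definition peval :: "(complex \<Rightarrow> 'a::comm_ring_1) \<Rightarrow> 'a cpoly \<Rightarrow> 'a" where
  "peval \<phi> p = (\<Sum>m\<in>Poly_Mapping.keys p. \<phi> (Poly_Mapping.lookup p m) * (\<Prod>x\<in>Poly_Mapping.keys m. x ^ Poly_Mapping.lookup m x))"

definition generating :: "(complex \<Rightarrow> 'a::comm_ring_1) \<Rightarrow> 'a set \<Rightarrow> bool" where
  "generating \<phi> X \<longleftrightarrow> peval \<phi> ` polys_in X = UNIV"

definition pres_ideal :: "(complex \<Rightarrow> 'a::comm_ring_1) \<Rightarrow> 'a set \<Rightarrow> 'a cpoly set" where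
  "pres_ideal \<phi> X = {p \<in> polys_in X. peval \<phi> p = 0}"

definition valuation :: "(complex \<Rightarrow> 'a::comm_ring_1) \<Rightarrow> ('a \<Rightarrow> 'q::linordered_ab_group_add trop) \<Rightarrow> bool" where
  "valuation \<phi> v \<longleftrightarrow>
     (\<forall>a b. v (a * b) = v a * v b) \<and>
     (\<forall>a b. v (a + b) \<le> max (v a) (v b)) \<and>
     v 0 = MInf \<and>
     (\<forall>c. c \<noteq> 0 \<longrightarrow> v (\<phi> c) = 1)"

definition valuations :: "(complex \<Rightarrow> 'a::comm_ring_1) \<Rightarrow> ('a \<Rightarrow> 'q::linordered_ab_group_add trop) set" where
  "valuations \<phi> = {v. valuation \<phi> v}"

text \<open>The pairing <m, q> = sum_x m_x q_x, computed in the tropical semiring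
  (tropical product of the powers q_x^(m_x)).\<close>
definition tpair :: "('a \<Rightarrow>\<^sub>0 nat) \<Rightarrow> ('a \<Rightarrow> 'q::linordered_ab_group_add trop) \<Rightarrow> 'q trop" where
  "tpair m q = (\<Prod>x\<in>Poly_Mapping.keys m. q x ^ Poly_Mapping.lookup m x)"

text \<open>T(f)(q) = max over the monomials of f of <m_i, q>; for f = 0 (no monomials) this is the
  tropical zero -infinity.\<close>
definition trop_eval :: "'a cpoly \<Rightarrow> ('a \<Rightarrow> 'q::linordered_ab_group_add trop) \<Rightarrow> 'q trop" where
  "trop_eval f q = (if Poly_Mapping.keys f = {} then MInf else Max ((\<lambda>m. tpair m q) ` Poly_Mapping.keys f))"

definition trop_hyp :: "'a cpoly \<Rightarrow> ('a \<Rightarrow> 'q::linordered_ab_group_add trop) set" where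
  "trop_hyp f = {q. trop_eval f q = MInf \<or>
      (\<exists>m1\<in>Poly_Mapping.keys f. \<exists>m2\<in>Poly_Mapping.keys f. m1 \<noteq> m2 \<and>
         tpair m1 q = trop_eval f q \<and> tpair m2 q = trop_eval f q)}"

text \<open>tr_Q(I) as a subset of Q^X, the points of Q^X being the extensional functions on X.\<close>
definition trop_var :: "'a set \<Rightarrow> 'a cpoly set \<Rightarrow> ('a \<Rightarrow> 'q::linordered_ab_group_add trop) set" where
  "trop_var X I = (X \<rightarrow>\<^sub>E UNIV) \<inter> (\<Inter>f\<in>I. trop_hyp f)"

definition piX :: "'a set \<Rightarrow> ('a \<Rightarrow> 'q trop) \<Rightarrow> ('a \<Rightarrow> 'q trop)" where
  "piX X v = restrict v X"

definition gensets :: "(complex \<Rightarrow> 'a::comm_ring_1) \<Rightarrow> 'a set set" where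
  "gensets \<phi> = {X. generating \<phi> X}"

text \<open>Inverse limit of tr_Q(I_X) over generating sets X (ordered by inclusion) with coordinate
  projections Q^Y -> Q^X (X subset Y) as transition maps: compatible families.\<close>
definition inv_lim :: "(complex \<Rightarrow> 'a::comm_ring_1) \<Rightarrow> ('a set \<Rightarrow> 'a \<Rightarrow> 'q::linordered_ab_group_add trop) set" where
  "inv_lim \<phi> = {F \<in> gensets \<phi> \<rightarrow>\<^sub>E UNIV.
      (\<forall>X\<in>gensets \<phi>. F X \<in> trop_var X (pres_ideal \<phi> X)) \<and>
      (\<forall>X\<in>gensets \<phi>. \<forall>Y\<in>gensets \<phi>. X \<subseteq> Y \<longrightarrow> restrict (F Y) X = F X)}"

end

theory Submission
  imports Defs
begin

definition gm :: "('b \<Rightarrow> 'c::comm_monoid_mult) \<Rightarrow> ('b \<Rightarrow>\<^sub>0 nat) \<Rightarrow> 'c" where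
  "gm g m = (\<Prod>x\<in>Poly_Mapping.keys m. g x ^ Poly_Mapping.lookup m x)"

lemma gm_superset:
  assumes "finite S" "Poly_Mapping.keys m \<subseteq> S"
  shows "gm g m = (\<Prod>x\<in>S. g x ^ Poly_Mapping.lookup m x)"
  unfolding gm_def
  by (rule prod.mono_neutral_left) (use assms in \<open>auto simp: in_keys_iff\<close>)

lemma gm_add: "gm g (m + n) = gm g m * gm g n"
proof -
  let ?S = "Poly_Mapping.keys m \<union> Poly_Mapping.keys n"
  have f: "finite ?S" by simp
  have "gm g (m + n) = (\<Prod>x\<in>?S. g x ^ Poly_Mapping.lookup (m+n) x)"
    by (rule gm_superset[OF f]) (rule keys_add)
  also have "\<dots> = (\<Prod>x\<in>?S. g x ^ Poly_Mapping.lookup m x) * (\<Prod>x\<in>?S. g x ^ Poly_Mapping.lookup n x)"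
    by (simp add: lookup_add power_add prod.distrib)
  also have "\<dots> = gm g m * gm g n"
    using gm_superset[OF f, of m g] gm_superset[OF f, of n g] by simp
  finally show ?thesis .
qed

lemma gm_single [simp]: "gm g (Poly_Mapping.single a k) = g a ^ k"
  unfolding gm_def by simp

lemma gm_zero: "gm g 0 = 1"
  unfolding gm_def by simp

lemma tpair_gm: "tpair m q = gm q m" unfolding tpair_def gm_def by simp

lemma gm_cong: "Poly_Mapping.keys m \<subseteq> X \<Longrightarrow> gm (restrict q X) m = gm q m"
  unfolding gm_def by (rule prod.cong) auto

lemma calg_0: "calg_hom \<phi> \<Longrightarrow> \<phi> 0 = 0"
  unfolding calg_hom_def by (metis add.right_neutral add_left_cancel)

lemma calg_uminus: "calg_hom \<phi> \<Longrightarrow> \<phi> (- c) = - \<phi> c"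
  unfolding calg_hom_def by (metis calg_0[unfolded calg_hom_def] add.right_inverse add_eq_0_iff2 calg_hom_def)

lemma peval_superset:
  assumes "calg_hom \<phi>" "finite S" "Poly_Mapping.keys p \<subseteq> S"
  shows "peval \<phi> p = (\<Sum>m\<in>S. \<phi> (Poly_Mapping.lookup p m) * gm id m)"
  unfolding peval_def gm_def id_def
  by (rule sum.mono_neutral_left) (use assms calg_0[OF assms(1)] in \<open>auto simp: in_keys_iff\<close>)

lemma peval_add:
  assumes "calg_hom \<phi>"
  shows "peval \<phi> (p + q) = peval \<phi> p + peval \<phi> q"
proof -
  let ?S = "Poly_Mapping.keys p \<union> Poly_Mapping.keys q"
  have f: "finite ?S" by simp
  have "peval \<phi> (p + q) = (\<Sum>m\<in>?S. \<phi> (Poly_Mapping.lookup (p+q) m) * gm id m)"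
    by (rule peval_superset[OF assms f]) (rule keys_add)
  also have "\<dots> = (\<Sum>m\<in>?S. \<phi> (Poly_Mapping.lookup p m) * gm id m) + (\<Sum>m\<in>?S. \<phi> (Poly_Mapping.lookup q m) * gm id m)"
    using assms by (simp add: lookup_add calg_hom_def distrib_right sum.distrib)
  also have "\<dots> = peval \<phi> p + peval \<phi> q"
    using peval_superset[OF assms f, of p] peval_superset[OF assms f, of q] by simp
  finally show ?thesis .
qed

lemma peval_single:
  assumes "calg_hom \<phi>"
  shows "peval \<phi> (Poly_Mapping.single m c) = \<phi> c * gm id m"
  using peval_superset[OF assms, of "{m}" "Poly_Mapping.single m c"] by simp

lemma tpair_le_eval: "m \<in> Poly_Mapping.keys f \<Longrightarrow> tpair m q \<le> trop_eval f q"
  unfolding trop_eval_def by auto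

lemma trop_hyp_other:
  assumes "q \<in> trop_hyp f" "m \<in> Poly_Mapping.keys f" "tpair m q \<noteq> MInf"
  shows "\<exists>m'\<in>Poly_Mapping.keys f. m' \<noteq> m \<and> tpair m q \<le> tpair m' q"
proof -
  have le: "tpair m q \<le> trop_eval f q" using tpair_le_eval[OF assms(2)] .
  have "trop_eval f q \<noteq> MInf"
  proof
    assume "trop_eval f q = MInf"
    with le have "tpair m q \<le> MInf" by simp
    then show False using assms(3) by (cases "tpair m q") auto
  qed
  with assms(1) obtain m1 m2 where m: "m1 \<in> Poly_Mapping.keys f" "m2 \<in> Poly_Mapping.keys f" "m1 \<noteq> m2"
    "tpair m1 q = trop_eval f q" "tpair m2 q = trop_eval f q"
    unfolding trop_hyp_def by blast
  show ?thesis
  proof (cases "m1 = m")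
    case True
    then show ?thesis using m le by (intro bexI[of _ m2]) auto
  next
    case False
    then show ?thesis using m le by (intro bexI[of _ m1]) auto
  qed
qed

lemma trop_one_ne: "(1::'q::linordered_ab_group_add trop) \<noteq> MInf" by (simp add: one_trop_def)

lemma trop_MInf_less: "(MInf::'q::linordered_ab_group_add trop) < T \<longleftrightarrow> T \<noteq> MInf"
  by (cases T) (auto simp: less_trop_def)

lemma val_mult: "valuation \<phi> v \<Longrightarrow> v (a * b) = v a * v b" unfolding valuation_def by blast
lemma val_add: "valuation \<phi> v \<Longrightarrow> v (a + b) \<le> max (v a) (v b)" unfolding valuation_def by blast
lemma val_0: "valuation \<phi> v \<Longrightarrow> v 0 = MInf" unfolding valuation_def by blast
lemma val_const: "valuation \<phi> v \<Longrightarrow> c \<noteq> 0 \<Longrightarrow> v (\<phi> c) = 1" unfolding valuation_def by blast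

lemma val_1: "calg_hom \<phi> \<Longrightarrow> valuation \<phi> v \<Longrightarrow> v 1 = 1"
  using val_const[of \<phi> v 1] by (simp add: calg_hom_def)

lemma val_m1: "calg_hom \<phi> \<Longrightarrow> valuation \<phi> v \<Longrightarrow> v (-1) = 1"
  using val_const[of \<phi> v "-1"] calg_uminus[of \<phi> 1] by (simp add: calg_hom_def)

lemma val_uminus: "calg_hom \<phi> \<Longrightarrow> valuation \<phi> v \<Longrightarrow> v (- x) = v x"
  using val_mult[of \<phi> v "-1" x] val_m1[of \<phi> v] by simp

lemma val_prod: "calg_hom \<phi> \<Longrightarrow> valuation \<phi> v \<Longrightarrow> v (\<Prod>x\<in>S. f x) = (\<Prod>x\<in>S. v (f x))"
  by (induction S rule: infinite_finite_induct) (auto simp: val_1 val_mult)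

lemma val_pow: "calg_hom \<phi> \<Longrightarrow> valuation \<phi> v \<Longrightarrow> v (x ^ k) = v x ^ k"
  by (induction k) (auto simp: val_1 val_mult)

lemma val_gm: "calg_hom \<phi> \<Longrightarrow> valuation \<phi> v \<Longrightarrow> v (gm id m) = gm v m"
  unfolding gm_def by (simp add: val_prod val_pow)

lemma val_sum_less:
  assumes "calg_hom \<phi>" "valuation \<phi> v" "T \<noteq> MInf" "\<forall>m\<in>S. v (g m) < T"
  shows "v (sum g S) < T"
  using assms(4)
proof (induction S rule: infinite_finite_induct)
  case (infinite A) then show ?case using val_0[OF assms(2)] assms(3) by (simp add: trop_MInf_less)
next
  case empty then show ?case using val_0[OF assms(2)] assms(3) by (simp add: trop_MInf_less)
next
  case (insert x F)
  then have "v (g x) < T" "v (sum g F) < T" by auto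
  moreover have "v (sum g (insert x F)) \<le> max (v (g x)) (v (sum g F))"
    using insert val_add[OF assms(2)] by simp
  ultimately show ?case by (meson le_less_trans max_less_iff_conj)
qed

lemma val_in_hyp:
  assumes cal: "calg_hom \<phi>" and val: "valuation \<phi> v" and f0: "peval \<phi> f = 0"
  shows "v \<in> trop_hyp f"
proof (rule ccontr)
  assume nh: "v \<notin> trop_hyp f"
  let ?K = "Poly_Mapping.keys f"
  let ?T = "trop_eval f v"
  have TM: "?T \<noteq> MInf" using nh unfolding trop_hyp_def by blast
  then have Kne: "?K \<noteq> {}" unfolding trop_eval_def by auto
  then have "?T = Max ((\<lambda>m. tpair m v) ` ?K)" unfolding trop_eval_def by simp
  then have "?T \<in> (\<lambda>m. tpair m v) ` ?K" using Kne by (simp add: Max_in)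
  then obtain m1 where m1: "m1 \<in> ?K" "tpair m1 v = ?T" by auto
  have less: "tpair m v < ?T" if "m \<in> ?K - {m1}" for m
  proof -
    have "tpair m v \<le> ?T" using that tpair_le_eval by blast
    moreover have "tpair m v \<noteq> ?T" using nh m1 that unfolding trop_hyp_def by blast
    ultimately show ?thesis by simp
  qed
  define t where "t m = \<phi> (Poly_Mapping.lookup f m) * gm id m" for m
  have vt: "v (t m) = tpair m v" if "m \<in> ?K" for m
    using that val_mult[OF val] val_const[OF val] val_gm[OF cal val]
    by (simp add: t_def tpair_gm in_keys_iff)
  have "0 = peval \<phi> f" using f0 by simp
  also have "\<dots> = sum t ?K" using peval_superset[OF cal, of ?K f] by (simp add: t_def)
  also have "\<dots> = t m1 + sum t (?K - {m1})" using m1(1) by (simp add: sum.remove)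
  finally have "t m1 = - sum t (?K - {m1})" by (simp add: eq_neg_iff_add_eq_0 add.commute)
  then have "v (t m1) = v (sum t (?K - {m1}))" using val_uminus[OF cal val] by simp
  moreover have "v (sum t (?K - {m1})) < ?T"
    by (rule val_sum_less[OF cal val TM]) (use less vt in auto)
  ultimately show False using vt[OF m1(1)] m1(2) by simp
qed

lemma part1:
  assumes cal: "calg_hom \<phi>" and val: "valuation \<phi> v" and f: "f \<in> pres_ideal \<phi> X"
  shows "restrict v X \<in> trop_hyp f"
proof -
  have kx: "Poly_Mapping.keys m \<subseteq> X" if "m \<in> Poly_Mapping.keys f" for m
    using f that unfolding pres_ideal_def polys_in_def by blast
  have tp: "tpair m (restrict v X) = tpair m v" if "m \<in> Poly_Mapping.keys f" for m
    using gm_cong[OF kx[OF that]] by (simp add: tpair_gm)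
  have im: "(\<lambda>m. tpair m (restrict v X)) ` Poly_Mapping.keys f = (\<lambda>m. tpair m v) ` Poly_Mapping.keys f"
    by (rule image_cong[OF refl tp])
  have te: "trop_eval f (restrict v X) = trop_eval f v"
    unfolding trop_eval_def im ..
  have "v \<in> trop_hyp f" using val_in_hyp[OF cal val] f unfolding pres_ideal_def by blast
  then consider "trop_eval f v = MInf" | m1 m2 where "m1 \<in> Poly_Mapping.keys f" "m2 \<in> Poly_Mapping.keys f" "m1 \<noteq> m2"
         "tpair m1 v = trop_eval f v" "tpair m2 v = trop_eval f v"
    unfolding trop_hyp_def by blast
  then show ?thesis
  proof cases
    case 1 then show ?thesis unfolding trop_hyp_def mem_Collect_eq te by blast
  next
    case 2
    then show ?thesis unfolding trop_hyp_def mem_Collect_eq te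
      using tp[OF 2(1)] tp[OF 2(2)] by metis
  qed
qed

section \<open>Surjectivity\<close>

abbreviation M :: "'a \<Rightarrow> ('a \<Rightarrow>\<^sub>0 nat)" where "M a \<equiv> Poly_Mapping.single a 1"

lemma gm_M [simp]: "gm g (M a) = g a" by (simp add: gm_single)

lemma M_inj: "M a = M b \<longleftrightarrow> a = b"
  by (metis inj_single injD lookup_single_eq lookup_single_not_eq one_neq_zero)

lemma M_ne0 [simp]: "M a \<noteq> 0"
  by (metis lookup_single_eq lookup_zero one_neq_zero)

lemma M_ne0' [simp]: "Poly_Mapping.single a (Suc 0) \<noteq> 0"
  using M_ne0[of a] by simp

lemma polys_in_UNIV [simp]: "polys_in UNIV = UNIV" unfolding polys_in_def by auto

lemma gen_UNIV: "calg_hom \<phi> \<Longrightarrow> generating \<phi> UNIV"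
  unfolding generating_def
proof (auto)
  fix a assume c: "calg_hom \<phi>"
  have "peval \<phi> (Poly_Mapping.single (M a) 1) = a" using peval_single[OF c] c by (simp add: calg_hom_def)
  then show "a \<in> range (peval \<phi>)" by (metis rangeI)
qed

lemma in_keysI: "Poly_Mapping.lookup f m \<noteq> 0 \<Longrightarrow> m \<in> Poly_Mapping.keys f" by (simp add: in_keys_iff)

lemma hyp_valuation:
  assumes cal: "calg_hom \<phi>" and hyp: "\<And>f. peval \<phi> f = 0 \<Longrightarrow> q \<in> trop_hyp f"
  shows "valuation \<phi> (q :: 'a::comm_ring_1 \<Rightarrow> 'q::linordered_ab_group_add trop)"
proof -
  have p1: "\<phi> 1 = 1" using cal by (simp add: calg_hom_def)
  have padd: "\<phi> (c + d) = \<phi> c + \<phi> d" for c d using cal by (simp add: calg_hom_def)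
  have keyssub: "Poly_Mapping.keys (Poly_Mapping.single m1 c1 + Poly_Mapping.single m2 c2) \<subseteq> {m1, m2}" for m1 m2 and c1 c2 :: complex
    using keys_add[of "Poly_Mapping.single m1 c1" "Poly_Mapping.single m2 c2"] by (auto split: if_splits)
  have keyssub3: "Poly_Mapping.keys (Poly_Mapping.single m1 c1 + Poly_Mapping.single m2 c2 + Poly_Mapping.single m3 c3) \<subseteq> {m1, m2, m3}" for m1 m2 m3 and c1 c2 c3 :: complex
    using keys_add[of "Poly_Mapping.single m1 c1 + Poly_Mapping.single m2 c2" "Poly_Mapping.single m3 c3"] keyssub[of m1 c1 m2 c2] by (auto split: if_splits)
  have z: "q 0 = MInf"
  proof (rule ccontr)
    assume ne: "q 0 \<noteq> MInf"
    let ?f = "Poly_Mapping.single (M (0::'a)) (1::complex)"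
    have "peval \<phi> ?f = 0" using peval_single[OF cal] p1 by simp
    then have "q \<in> trop_hyp ?f" by (rule hyp)
    from trop_hyp_other[OF this _ ] ne show False by (simp add: tpair_gm)
  qed
  have cst: "q (\<phi> c) = 1" if c0: "c \<noteq> 0" for c
  proof -
    let ?f = "Poly_Mapping.single (M (\<phi> c)) (1::complex) + Poly_Mapping.single 0 (-c)"
    have "peval \<phi> ?f = 0" using peval_add[OF cal] peval_single[OF cal] p1 calg_uminus[OF cal]
      by (simp add: gm_zero)
    then have h: "q \<in> trop_hyp ?f" by (rule hyp)
    have k1: "M (\<phi> c) \<in> Poly_Mapping.keys ?f"
      by (rule in_keysI) (simp add: lookup_add lookup_single when_def)
    have k2: "0 \<in> Poly_Mapping.keys ?f"
      by (rule in_keysI) (use c0 in \<open>simp add: lookup_add lookup_single when_def\<close>)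
    have ks: "Poly_Mapping.keys ?f \<subseteq> {M (\<phi> c), 0}" by (rule keyssub)
    have t0: "tpair 0 q = 1" by (simp add: tpair_gm gm_zero)
    have tM: "tpair (M (\<phi> c)) q = q (\<phi> c)" by (simp add: tpair_gm)
    obtain m' where m': "m' \<in> Poly_Mapping.keys ?f" "m' \<noteq> 0" "1 \<le> tpair m' q"
      using trop_hyp_other[OF h k2] t0 trop_one_ne by metis
    then have "m' = M (\<phi> c)" using ks by auto
    then have ge: "1 \<le> q (\<phi> c)" using m' tM by simp
    then have "q (\<phi> c) \<noteq> MInf" by (auto simp: one_trop_def)
    then obtain m'' where m'': "m'' \<in> Poly_Mapping.keys ?f" "m'' \<noteq> M (\<phi> c)" "q (\<phi> c) \<le> tpair m'' q"
      using trop_hyp_other[OF h k1] tM by metis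
    then have "m'' = 0" using ks by auto
    then have "q (\<phi> c) \<le> 1" using m'' t0 by simp
    with ge show ?thesis by simp
  qed
  have mul: "q (a * b) = q a * q b" for a b
  proof -
    let ?N = "M a + M b"
    let ?f = "Poly_Mapping.single (M (a*b)) (1::complex) + Poly_Mapping.single ?N (-1)"
    have "peval \<phi> ?f = 0" using peval_add[OF cal] peval_single[OF cal] p1 calg_uminus[OF cal]
      by (simp add: gm_add)
    then have h: "q \<in> trop_hyp ?f" by (rule hyp)
    have neq: "M (a*b) \<noteq> ?N"
    proof
      assume e: "M (a*b) = ?N"
      have "Poly_Mapping.lookup (M (a*b)) a = Poly_Mapping.lookup ?N a"
           "Poly_Mapping.lookup (M (a*b)) b = Poly_Mapping.lookup ?N b" using e by auto
      then show False by (auto simp: lookup_add lookup_single when_def split: if_splits)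
    qed
    have k1: "M (a*b) \<in> Poly_Mapping.keys ?f"
      by (rule in_keysI) (use neq in \<open>simp add: lookup_add lookup_single_not_eq\<close>)
    have k2: "?N \<in> Poly_Mapping.keys ?f"
      by (rule in_keysI) (use neq in \<open>simp add: lookup_add lookup_single_not_eq\<close>)
    have ks: "Poly_Mapping.keys ?f \<subseteq> {M (a*b), ?N}" by (rule keyssub)
    have tN: "tpair ?N q = q a * q b" by (simp add: tpair_gm gm_add)
    have tM: "tpair (M (a*b)) q = q (a*b)" by (simp add: tpair_gm)
    have l1: "q (a*b) \<le> q a * q b" if ne1: "q (a*b) \<noteq> MInf"
    proof -
      obtain m' where m': "m' \<in> Poly_Mapping.keys ?f" "m' \<noteq> M (a*b)" "q (a*b) \<le> tpair m' q"
        using trop_hyp_other[OF h k1] ne1 tM by metis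
      then have "m' = ?N" using ks by auto
      then show ?thesis using m' tN by simp
    qed
    have l2: "q a * q b \<le> q (a*b)" if ne2: "q a * q b \<noteq> MInf"
    proof -
      obtain m' where m': "m' \<in> Poly_Mapping.keys ?f" "m' \<noteq> ?N" "q a * q b \<le> tpair m' q"
        using trop_hyp_other[OF h k2] ne2 tN by metis
      then have "m' = M (a*b)" using ks by auto
      then show ?thesis using m' tM by simp
    qed
    show ?thesis
    proof (cases "q (a*b) = MInf")
      case True
      then show ?thesis using l2 by (cases "q a * q b") auto
    next
      case False
      then have "q a * q b \<noteq> MInf" using l1 by (cases "q a * q b"; cases "q (a*b)") auto
      then show ?thesis using l1 l2 False by (meson antisym)
    qed
  qed
  have add: "q (a + b) \<le> max (q a) (q b)" for a b
  proof (cases "a + b = a \<or> a + b = b")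
    case True then show ?thesis by (metis max.cobounded1 max.cobounded2)
  next
    case False
    let ?f = "Poly_Mapping.single (M (a+b)) (1::complex) + Poly_Mapping.single (M a) (-1) + Poly_Mapping.single (M b) (-1)"
    have "peval \<phi> ?f = 0" using peval_add[OF cal] peval_single[OF cal] p1 calg_uminus[OF cal]
      by simp
    then have h: "q \<in> trop_hyp ?f" by (rule hyp)
    have k1: "M (a+b) \<in> Poly_Mapping.keys ?f"
    proof (rule in_keysI)
      have "M a \<noteq> M (a+b)" "M b \<noteq> M (a+b)" using False M_inj by metis+
      then show "Poly_Mapping.lookup ?f (M (a+b)) \<noteq> 0" by (simp add: lookup_add lookup_single_not_eq)
    qed
    have ks: "Poly_Mapping.keys ?f \<subseteq> {M (a+b), M a, M b}" by (rule keyssub3)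
    show ?thesis
    proof (cases "q (a+b) = MInf")
      case True then show ?thesis by simp
    next
      case ne: False
      have tM: "tpair (M (a+b)) q = q (a+b)" by (simp add: tpair_gm)
      obtain m' where m': "m' \<in> Poly_Mapping.keys ?f" "m' \<noteq> M (a+b)" "q (a+b) \<le> tpair m' q"
        using trop_hyp_other[OF h k1] ne tM by metis
      then have "m' = M a \<or> m' = M b" using ks by auto
      then show ?thesis using m' by (auto simp: tpair_gm le_max_iff_disj)
    qed
  qed
  show ?thesis unfolding valuation_def using mul add z cst by blast
qed


theorem theorem2p1:
  fixes \<phi> :: "complex \<Rightarrow> 'a::comm_ring_1"
  assumes "calg_hom \<phi>"
  shows "(\<forall>X. generating \<phi> X \<longrightarrow>
            (\<forall>v \<in> (valuations \<phi> :: ('a \<Rightarrow> 'q::linordered_ab_group_add trop) set).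
               piX X v \<in> trop_var X (pres_ideal \<phi> X)))
       \<and> bij_betw (\<lambda>v. \<lambda>X\<in>gensets \<phi>. piX X v)
           (valuations \<phi> :: ('a \<Rightarrow> 'q::linordered_ab_group_add trop) set) (inv_lim \<phi>)"
proof -
  note cal = assms
  have P1: "piX X v \<in> trop_var X (pres_ideal \<phi> X)" if "valuation \<phi> v"
    for X and v :: "'a \<Rightarrow> 'q trop"
    unfolding piX_def trop_var_def using part1[OF cal that] by auto
  have U: "UNIV \<in> gensets \<phi>" using gen_UNIV[OF cal] by (simp add: gensets_def)
  have inj: "inj_on (\<lambda>v. \<lambda>X\<in>gensets \<phi>. piX X v) (valuations \<phi> :: ('a \<Rightarrow> 'q trop) set)"
  proof (rule inj_onI)
    fix v w :: "'a \<Rightarrow> 'q trop"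
    assume "(\<lambda>X\<in>gensets \<phi>. piX X v) = (\<lambda>X\<in>gensets \<phi>. piX X w)"
    then have "(\<lambda>X\<in>gensets \<phi>. piX X v) UNIV = (\<lambda>X\<in>gensets \<phi>. piX X w) UNIV" by simp
    then show "v = w" using U by (simp add: piX_def restrict_UNIV)
  qed
  have sub: "(\<lambda>v. \<lambda>X\<in>gensets \<phi>. piX X v) ` (valuations \<phi> :: ('a \<Rightarrow> 'q trop) set) \<subseteq> inv_lim \<phi>"
  proof
    fix F assume "F \<in> (\<lambda>v. \<lambda>X\<in>gensets \<phi>. piX X v) ` (valuations \<phi> :: ('a \<Rightarrow> 'q trop) set)"
    then obtain v :: "'a \<Rightarrow> 'q trop" where v: "valuation \<phi> v" and F: "F = (\<lambda>X\<in>gensets \<phi>. piX X v)"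
      by (auto simp: valuations_def)
    show "F \<in> inv_lim \<phi>"
      unfolding inv_lim_def F
    proof (intro CollectI conjI ballI impI)
      show "(\<lambda>X\<in>gensets \<phi>. piX X v) \<in> gensets \<phi> \<rightarrow>\<^sub>E UNIV" by simp
      fix X assume X: "X \<in> gensets \<phi>"
      then show "(\<lambda>X\<in>gensets \<phi>. piX X v) X \<in> trop_var X (pres_ideal \<phi> X)" using P1[OF v] by simp
      fix Y assume "Y \<in> gensets \<phi>" "X \<subseteq> Y"
      then show "restrict ((\<lambda>X\<in>gensets \<phi>. piX X v) Y) X = (\<lambda>X\<in>gensets \<phi>. piX X v) X"
        using X by (auto simp: piX_def restrict_def fun_eq_iff)
    qed
  qed
  have sup: "inv_lim \<phi> \<subseteq> (\<lambda>v. \<lambda>X\<in>gensets \<phi>. piX X v) ` (valuations \<phi> :: ('a \<Rightarrow> 'q trop) set)"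
  proof
    fix F :: "'a set \<Rightarrow> 'a \<Rightarrow> 'q trop"
    assume F: "F \<in> inv_lim \<phi>"
    then have FE: "F \<in> gensets \<phi> \<rightarrow>\<^sub>E UNIV"
      and Fv: "\<And>X. X \<in> gensets \<phi> \<Longrightarrow> F X \<in> trop_var X (pres_ideal \<phi> X)"
      and Fc: "\<And>X Y. X \<in> gensets \<phi> \<Longrightarrow> Y \<in> gensets \<phi> \<Longrightarrow> X \<subseteq> Y \<Longrightarrow> restrict (F Y) X = F X"
      unfolding inv_lim_def by auto
    let ?v = "F UNIV"
    have val: "valuation \<phi> ?v"
    proof (rule hyp_valuation[OF cal])
      fix f assume "peval \<phi> f = 0"
      then have "f \<in> pres_ideal \<phi> UNIV" by (simp add: pres_ideal_def)
      then show "?v \<in> trop_hyp f" using Fv[OF U] unfolding trop_var_def by blast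
    qed
    have "F = (\<lambda>X\<in>gensets \<phi>. piX X ?v)"
    proof
      fix X show "F X = (\<lambda>X\<in>gensets \<phi>. piX X ?v) X"
      proof (cases "X \<in> gensets \<phi>")
        case True then show ?thesis using Fc[OF True U] by (simp add: piX_def)
      next
        case False
        have "F X = undefined" using PiE_arb[OF FE False] .
        then show ?thesis using False by simp
      qed
    qed
    then show "F \<in> (\<lambda>v. \<lambda>X\<in>gensets \<phi>. piX X v) ` (valuations \<phi> :: ('a \<Rightarrow> 'q trop) set)"
      using val unfolding valuations_def by blast
  qed
  show ?thesis
    using P1 inj sub sup unfolding bij_betw_def valuations_def by blast
qed

end
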